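(* Let $K$ be a field and let $I_A\subset K[x_1,\ldots,x_n]$ be a toric ideal of height $r\ge 3$ such that $\mathrm{bar}(I_A)\le 2r-2$. Then $I_A$ is radical splittable.
   Context: $A=\{{\bf a}_1,\ldots,{\bf a}_n\}\subset\mathbb{Z}^m$ is a vector configuration with $\ker_{\mathbb{Z}}(A)\cap\mathbb{N}^n=\{{\bf 0}\}$, where $\ker_{\mathbb{Z}}(A)=\{{\bf u}\in\mathbb{Z}^n\mid\sum u_i{\bf a}_i={\bf 0}\}$; $I_A$ is the kernel of $K[x_1,\ldots,x_n]\to K[t_1^{\pm1},\ldots,t_m^{\pm1}]$, $x_i\mapsto{\bf t}^{{\bf a}_i}$, and its height equals $\dim_{\mathbb{Q}}\ker_{\mathbb{Q}}(A)$. The binomial arithmetical rank $\mathrm{bar}(I_A)$ is the smallest $t$ such that there exist binomials $B_1,\ldots,B_t\in I_A$ with $I_A=\mathrm{rad}(B_1,\ldots,B_t)$. $I_A$ is radical splittable if there exist toric ideals $I_{A_1},I_{A_2}\subset K[x_1,\ldots,x_n]$ with $I_A=\mathrm{rad}(I_{A_1}+I_{A_2})$ and $I_{A_i}\ne I_A$ for $i=1,2$. *)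

theory Defs
  imports Complex_Main "HOL-Library.Poly_Mapping" "HOL-Library.Function_Algebras"
begin

type_synonym ('n, 'k) mpoly = "('n \<Rightarrow>\<^sub>0 nat) \<Rightarrow>\<^sub>0 'k"

text \<open>A vector configuration: a_i = A i, a vector with integer coordinates indexed by 'm.\<close>

definition lin_img :: "('n::finite \<Rightarrow> 'm \<Rightarrow> int) \<Rightarrow> ('n \<Rightarrow>\<^sub>0 nat) \<Rightarrow> ('m \<Rightarrow> int)" where
  "lin_img A \<alpha> = (\<lambda>j. \<Sum>i\<in>UNIV. int (Poly_Mapping.lookup \<alpha> i) * A i j)"

definition pointed_config :: "('n::finite \<Rightarrow> 'm \<Rightarrow> int) \<Rightarrow> bool" where
  "pointed_config A \<longleftrightarrow> (\<forall>u::'n \<Rightarrow> nat. (\<forall>j. (\<Sum>i\<in>UNIV. int (u i) * A i j) = 0) \<longrightarrow> (\<forall>i. u i = 0))"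

text \<open>The toric ideal I_A: the kernel of x_i \<mapsto> t^{a_i}. The image of f is
  \<Sum>_b (\<Sum>_{A\<alpha>=b} f_\<alpha>) t^b, so f is in the kernel iff every such inner sum vanishes.\<close>
definition toric_ideal :: "('n::finite \<Rightarrow> 'm \<Rightarrow> int) \<Rightarrow> ('n, 'k::field) mpoly set" where
  "toric_ideal A = {f. \<forall>b. (\<Sum>\<alpha>\<in>{\<alpha>\<in>Poly_Mapping.keys f. lin_img A \<alpha> = b}. Poly_Mapping.lookup f \<alpha>) = 0}"

definition is_ideal :: "'a::comm_ring_1 set \<Rightarrow> bool" where
  "is_ideal J \<longleftrightarrow> 0 \<in> J \<and> (\<forall>a\<in>J. \<forall>b\<in>J. a + b \<in> J) \<and> (\<forall>r. \<forall>a\<in>J. r * a \<in> J)"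

definition ideal_gen :: "'a::comm_ring_1 set \<Rightarrow> 'a set" where
  "ideal_gen S = \<Inter>{J. is_ideal J \<and> S \<subseteq> J}"

definition ideal_sum :: "'a::comm_ring_1 set \<Rightarrow> 'a set \<Rightarrow> 'a set" where
  "ideal_sum I J = {a + b | a b. a \<in> I \<and> b \<in> J}"

definition rad :: "'a::comm_ring_1 set \<Rightarrow> 'a set" where
  "rad J = {f. \<exists>k::nat. f ^ k \<in> J}"

definition mono :: "('n \<Rightarrow>\<^sub>0 nat) \<Rightarrow> ('n, 'k::field) mpoly" where
  "mono u = Poly_Mapping.single u 1"

definition is_binomial :: "('n, 'k::field) mpoly \<Rightarrow> bool" where
  "is_binomial f \<longleftrightarrow> (\<exists>u v. f = mono u - mono v)"

definition bar :: "('n, 'k::field) mpoly set \<Rightarrow> nat" where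
  "bar I = (LEAST t. \<exists>Bs. length Bs = t \<and> (\<forall>B\<in>set Bs. is_binomial B \<and> B \<in> I)
                         \<and> I = rad (ideal_gen (set Bs)))"

text \<open>Height of I_A, which by the standing facts equals dim_Q ker_Q(A).\<close>
definition kerQ :: "('n::finite \<Rightarrow> 'm \<Rightarrow> int) \<Rightarrow> ('n \<Rightarrow> rat) set" where
  "kerQ A = {v. \<forall>j. (\<Sum>i\<in>UNIV. v i * of_int (A i j)) = 0}"

definition toric_height :: "('n::finite \<Rightarrow> 'm \<Rightarrow> int) \<Rightarrow> nat" where
  "toric_height A = vector_space.dim (\<lambda>(c::rat) v i. c * v i) (kerQ A)"

text \<open>Radical splittable; the configurations A_1, A_2 live in Z^{m_i} for some m_i,
  encoded as integer vectors indexed by nat vanishing from index m_i on.\<close>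
definition radical_splittable :: "('n::finite, 'k::field) mpoly set \<Rightarrow> bool" where
  "radical_splittable I \<longleftrightarrow>
     (\<exists>(A1::'n \<Rightarrow> nat \<Rightarrow> int) (A2::'n \<Rightarrow> nat \<Rightarrow> int) m1 m2.
        (\<forall>i j. m1 \<le> j \<longrightarrow> A1 i j = 0) \<and> (\<forall>i j. m2 \<le> j \<longrightarrow> A2 i j = 0) \<and>
        pointed_config A1 \<and> pointed_config A2 \<and>
        I = rad (ideal_sum (toric_ideal A1) (toric_ideal A2)) \<and>
        toric_ideal A1 \<noteq> I \<and> toric_ideal A2 \<noteq> I)"

end

theory Submission
  imports Defs
begin

definition phi :: "(('n \<Rightarrow>\<^sub>0 nat) \<Rightarrow> 'c::comm_monoid_add) \<Rightarrow> (('n \<Rightarrow>\<^sub>0 nat) \<Rightarrow>\<^sub>0 'k::comm_ring_1) \<Rightarrow> ('c \<Rightarrow>\<^sub>0 'k)" where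
  "phi h f = (\<Sum>\<alpha>\<in>Poly_Mapping.keys f. Poly_Mapping.single (h \<alpha>) (Poly_Mapping.lookup f \<alpha>))"

lemma phi_superset:
  assumes "finite S" "Poly_Mapping.keys f \<subseteq> S"
  shows "phi h f = (\<Sum>\<alpha>\<in>S. Poly_Mapping.single (h \<alpha>) (Poly_Mapping.lookup f \<alpha>))"
  unfolding phi_def
  by (rule sum.mono_neutral_left) (use assms in \<open>auto simp: in_keys_iff\<close>)

lemma phi_add: "phi h (f + g) = phi h f + phi h g"
proof -
  let ?S = "Poly_Mapping.keys f \<union> Poly_Mapping.keys g"
  have "phi h (f + g) = (\<Sum>\<alpha>\<in>?S. Poly_Mapping.single (h \<alpha>) (Poly_Mapping.lookup (f+g) \<alpha>))"
    by (rule phi_superset) (auto dest: keys_add[THEN subsetD])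
  also have "\<dots> = (\<Sum>\<alpha>\<in>?S. Poly_Mapping.single (h \<alpha>) (Poly_Mapping.lookup f \<alpha>))
     + (\<Sum>\<alpha>\<in>?S. Poly_Mapping.single (h \<alpha>) (Poly_Mapping.lookup g \<alpha>))"
    by (simp add: lookup_add single_add sum.distrib)
  also have "\<dots> = phi h f + phi h g"
    by (subst (1 2) phi_superset[of ?S]) auto
  finally show ?thesis .
qed

lemma phi_zero [simp]: "phi h 0 = 0"
  by (simp add: phi_def)

lemma phi_sum: "phi h (\<Sum>i\<in>I. F i) = (\<Sum>i\<in>I. phi h (F i))"
  by (induction I rule: infinite_finite_induct) (auto simp: phi_add)

lemma phi_single [simp]: "phi h (Poly_Mapping.single \<alpha> c) = Poly_Mapping.single (h \<alpha>) c"
  by (simp add: phi_def)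

lemma pm_monomials: "f = (\<Sum>\<alpha>\<in>Poly_Mapping.keys f. Poly_Mapping.single \<alpha> (Poly_Mapping.lookup f \<alpha>))"
proof (rule poly_mapping_eqI)
  fix k
  show "Poly_Mapping.lookup f k = Poly_Mapping.lookup (\<Sum>\<alpha>\<in>Poly_Mapping.keys f. Poly_Mapping.single \<alpha> (Poly_Mapping.lookup f \<alpha>)) k"
    by (cases "k \<in> Poly_Mapping.keys f")
       (auto simp: lookup_sum lookup_single when_def in_keys_iff)
qed

lemma phi_mult:
  assumes hadd: "\<And>a b. h (a + b) = h a + h b"
  shows "phi h (f * g) = phi h f * phi h g"
proof -
  let ?F = "Poly_Mapping.keys f" and ?G = "Poly_Mapping.keys g"
  have "f * g = (\<Sum>\<alpha>\<in>?F. Poly_Mapping.single \<alpha> (Poly_Mapping.lookup f \<alpha>)) * (\<Sum>\<beta>\<in>?G. Poly_Mapping.single \<beta> (Poly_Mapping.lookup g \<beta>))"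
    by (subst (1) pm_monomials[of f], subst (1) pm_monomials[of g]) (rule refl)
  also have "\<dots> = (\<Sum>\<alpha>\<in>?F. \<Sum>\<beta>\<in>?G. Poly_Mapping.single (\<alpha> + \<beta>) (Poly_Mapping.lookup f \<alpha> * Poly_Mapping.lookup g \<beta>))"
    by (simp add: sum_product mult_single)
  finally have "phi h (f * g) = (\<Sum>\<alpha>\<in>?F. \<Sum>\<beta>\<in>?G. Poly_Mapping.single (h \<alpha> + h \<beta>) (Poly_Mapping.lookup f \<alpha> * Poly_Mapping.lookup g \<beta>))"
    by (simp add: phi_sum hadd)
  also have "\<dots> = phi h f * phi h g"
    by (simp add: phi_def sum_product mult_single)
  finally show ?thesis .
qed

lemma phi_one: assumes "h 0 = 0" shows "phi h 1 = 1"
  using phi_single[of h 0 1] assms by simp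

lemma phi_power:
  assumes "\<And>a b. h (a + b) = h a + h b" "h 0 = 0"
  shows "phi h (f ^ k) = phi h f ^ k"
  by (induction k) (simp_all add: phi_one[of h, OF assms(2)] phi_mult[OF assms(1)])

lemma lookup_phi: "Poly_Mapping.lookup (phi h f) c = (\<Sum>\<alpha>\<in>{\<alpha>\<in>Poly_Mapping.keys f. h \<alpha> = c}. Poly_Mapping.lookup f \<alpha>)"
  unfolding phi_def lookup_sum lookup_single when_def
  by (simp add: sum.inter_filter)

lemma phi_eq_0_iff:
  "phi h f = 0 \<longleftrightarrow> (\<forall>c. (\<Sum>\<alpha>\<in>{\<alpha>\<in>Poly_Mapping.keys f. h \<alpha> = c}. Poly_Mapping.lookup f \<alpha>) = 0)"
  by (metis lookup_phi lookup_zero poly_mapping_eqI)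

lemma phi_eq_0_iff':
  "phi h f = 0 \<longleftrightarrow> (\<forall>\<gamma>\<in>Poly_Mapping.keys f. (\<Sum>\<alpha>\<in>{\<alpha>\<in>Poly_Mapping.keys f. h \<alpha> = h \<gamma>}. Poly_Mapping.lookup f \<alpha>) = 0)"
  unfolding phi_eq_0_iff
proof safe
  fix c assume H: "\<forall>\<gamma>\<in>Poly_Mapping.keys f. (\<Sum>\<alpha>\<in>{\<alpha>\<in>Poly_Mapping.keys f. h \<alpha> = h \<gamma>}. Poly_Mapping.lookup f \<alpha>) = 0"
  show "(\<Sum>\<alpha>\<in>{\<alpha>\<in>Poly_Mapping.keys f. h \<alpha> = c}. Poly_Mapping.lookup f \<alpha>) = 0"
  proof (cases "\<exists>\<gamma>\<in>Poly_Mapping.keys f. h \<gamma> = c")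
    case True then show ?thesis using H by blast
  next
    case False then have E: "{\<alpha>\<in>Poly_Mapping.keys f. h \<alpha> = c} = {}" by auto
    show ?thesis by (simp only: E sum.empty)
  qed
qed blast

lemma phi_fibers:
  assumes "\<And>a b. h1 a = h1 b \<longleftrightarrow> h2 a = h2 b"
  shows "phi h1 f = 0 \<longleftrightarrow> phi h2 f = 0"
  unfolding phi_eq_0_iff' using assms by presburger

lemma toric_phi: "toric_ideal A = {f. phi (lin_img A) f = 0}"
  unfolding toric_ideal_def phi_eq_0_iff by simp

lemma lin_img_add: "lin_img A (a + b) = lin_img A a + lin_img A b"
  by (auto simp: lin_img_def lookup_add algebra_simps sum.distrib fun_eq_iff)

lemma lin_img_0: "lin_img A 0 = 0"
  by (auto simp: lin_img_def fun_eq_iff)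

lemma is_ideal_toric: "is_ideal (toric_ideal A :: ('n::finite, 'k::field) mpoly set)"
  unfolding is_ideal_def toric_phi
  by (simp add: phi_add phi_mult lin_img_add)

lemma toric_radical:
  fixes A :: "'n::finite \<Rightarrow> 'm::finite \<Rightarrow> int" and f :: "('n, 'k::field) mpoly"
  assumes "f ^ k \<in> toric_ideal A"
  shows "f \<in> toric_ideal A"
proof -
  obtain N :: nat and g :: "nat \<Rightarrow> 'm" where gN: "(UNIV :: 'm set) = g ` {i. i < N}"
    using finite_imp_nat_seg_image_inj_on[OF finite_UNIV[where 'a='m]] by blast
  define h :: "('n \<Rightarrow>\<^sub>0 nat) \<Rightarrow> (nat \<Rightarrow>\<^sub>0 int)" where
    "h \<alpha> = (\<Sum>j<N. Poly_Mapping.single j (lin_img A \<alpha> (g j)))" for \<alpha>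
  have lh: "Poly_Mapping.lookup (h \<alpha>) j = (if j < N then lin_img A \<alpha> (g j) else 0)" for \<alpha> j
    unfolding h_def lookup_sum lookup_single when_def by (simp add: sum.delta)
  have fib: "h a = h b \<longleftrightarrow> lin_img A a = lin_img A b" for a b
  proof
    assume hab: "h a = h b"
    show "lin_img A a = lin_img A b"
    proof
      fix m :: 'm
      have "m \<in> g ` {i. i < N}" using gN by blast
      then obtain j where j: "j < N" "m = g j" by blast
      have "Poly_Mapping.lookup (h a) j = Poly_Mapping.lookup (h b) j" using hab by simp
      then show "lin_img A a m = lin_img A b m" using j by (simp add: lh)
    qed
  next
    assume "lin_img A a = lin_img A b" then show "h a = h b" by (simp add: h_def)
  qed
  have hadd: "h (a + b) = h a + h b" for a b
    by (simp add: h_def lin_img_add single_add sum.distrib)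
  have h0: "h 0 = 0" by (simp add: h_def lin_img_0)
  have "phi (lin_img A) (f ^ k) = 0" using assms by (simp add: toric_phi)
  then have "phi h (f ^ k) = 0" using phi_fibers[of h "lin_img A"] fib by blast
  then have "phi h f ^ k = 0" by (simp add: phi_power[OF hadd h0])
  then have "phi h f = 0" by simp
  then have "phi (lin_img A) f = 0" using phi_fibers[of h "lin_img A"] fib by blast
  then show ?thesis by (simp add: toric_phi)
qed

lemma dickson:
  fixes I :: "'a set"
  assumes "finite I"
  shows "\<exists>F \<subseteq> S. finite F \<and> (\<forall>s\<in>S. \<exists>f\<in>F. \<forall>j\<in>I. f j \<le> (s j :: nat))"
  using assms
proof (induction I arbitrary: S rule: finite_induct)
  case empty
  show ?case
  proof (cases "S = {}")
    case True then show ?thesis by auto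
  next
    case False then obtain s0 where "s0 \<in> S" by auto
    then show ?thesis by (intro exI[of _ "{s0}"]) auto
  qed
next
  case (insert i I)
  obtain F0 where F0: "F0 \<subseteq> S" "finite F0" "\<forall>s\<in>S. \<exists>f\<in>F0. \<forall>j\<in>I. f j \<le> s j"
    using insert.IH[of S] by blast
  have "\<forall>c. \<exists>F. F \<subseteq> {s\<in>S. s i = c} \<and> finite F \<and> (\<forall>s\<in>{s\<in>S. s i = c}. \<exists>f\<in>F. \<forall>j\<in>I. f j \<le> s j)"
    using insert.IH by blast
  from choice[OF this] obtain G where G: "\<And>c. G c \<subseteq> {s\<in>S. s i = c} \<and> finite (G c) \<and> (\<forall>s\<in>{s\<in>S. s i = c}. \<exists>f\<in>G c. \<forall>j\<in>I. f j \<le> s j)"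
    by blast
  define M where "M = Max ((\<lambda>f. f i) ` F0)"
  define F where "F = F0 \<union> (\<Union>c\<in>{..<M}. G c)"
  have Gfin: "finite (G c)" for c using G by blast
  have "F \<subseteq> S" unfolding F_def using F0(1) G by blast
  moreover have "finite F" by (simp add: F_def F0(2) Gfin)
  moreover have "\<forall>s\<in>S. \<exists>f\<in>F. \<forall>j\<in>insert i I. f j \<le> s j"
  proof
    fix s assume s: "s \<in> S"
    then obtain f0 where f0: "f0 \<in> F0" "\<forall>j\<in>I. f0 j \<le> s j" using F0 by blast
    show "\<exists>f\<in>F. \<forall>j\<in>insert i I. f j \<le> s j"
    proof (cases "f0 i \<le> s i")
      case True then show ?thesis using f0 by (auto simp: F_def)
    next
      case False
      have "f0 i \<le> M" unfolding M_def using f0 F0 by (intro Max_ge) auto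
      with False have lt: "s i < M" by simp
      from G[of "s i"] s obtain f where f: "f \<in> G (s i)" "\<forall>j\<in>I. f j \<le> s j" by blast
      then have "f i = s i" using G[of "s i"] by blast
      then show ?thesis using f lt by (intro bexI[of _ f]) (auto simp: F_def)
    qed
  qed
  ultimately show ?case by blast
qed

lemma dickson_pairs:
  fixes S :: "(('n::finite \<Rightarrow>\<^sub>0 nat) \<times> ('n \<Rightarrow>\<^sub>0 nat)) set"
  shows "\<exists>F \<subseteq> S. finite F \<and> (\<forall>(u,v)\<in>S. \<exists>(u',v')\<in>F. \<forall>i. Poly_Mapping.lookup u' i \<le> Poly_Mapping.lookup u i \<and> Poly_Mapping.lookup v' i \<le> Poly_Mapping.lookup v i)"
proof -
  define e :: "('n \<Rightarrow>\<^sub>0 nat) \<times> ('n \<Rightarrow>\<^sub>0 nat) \<Rightarrow> ('n + 'n \<Rightarrow> nat)" where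
    "e p = case_sum (Poly_Mapping.lookup (fst p)) (Poly_Mapping.lookup (snd p))" for p
  have inj: "inj e"
  proof (rule injI)
    fix p q assume epq: "e p = e q"
    have 1: "Poly_Mapping.lookup (fst p) x = Poly_Mapping.lookup (fst q) x" for x
      using fun_cong[OF epq, of "Inl x"] by (simp add: e_def)
    have 2: "Poly_Mapping.lookup (snd p) x = Poly_Mapping.lookup (snd q) x" for x
      using fun_cong[OF epq, of "Inr x"] by (simp add: e_def)
    show "p = q" by (rule prod_eqI; rule poly_mapping_eqI) (simp_all add: 1 2)
  qed
  have "\<exists>F' \<subseteq> e ` S. finite F' \<and> (\<forall>s\<in>e ` S. \<exists>f\<in>F'. \<forall>j\<in>(UNIV :: ('n + 'n) set). f j \<le> s j)"
    by (rule dickson) simp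
  then obtain F' where F': "F' \<subseteq> e ` S" "finite F'" "\<forall>s\<in>e ` S. \<exists>f\<in>F'. \<forall>j\<in>UNIV. f j \<le> s j"
    by blast
  define F where "F = S \<inter> e -` F'"
  have c1: "finite F" unfolding F_def using F'(2) inj by (simp add: finite_vimageI)
  have c2: "F \<subseteq> S" by (auto simp: F_def)
  have c3: "\<forall>(u,v)\<in>S. \<exists>(u',v')\<in>F. \<forall>i. Poly_Mapping.lookup u' i \<le> Poly_Mapping.lookup u i \<and> Poly_Mapping.lookup v' i \<le> Poly_Mapping.lookup v i"
  proof safe
    fix u v assume uv: "(u, v) \<in> S"
    then obtain f where f: "f \<in> F'" "\<forall>j. f j \<le> e (u,v) j" using F'(3) by blast
    then obtain p where p: "p \<in> S" "f = e p" using F'(1) by blast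
    then have "p \<in> F" using f by (auto simp: F_def)
    moreover have "\<forall>i. Poly_Mapping.lookup (fst p) i \<le> Poly_Mapping.lookup u i \<and> Poly_Mapping.lookup (snd p) i \<le> Poly_Mapping.lookup v i"
    proof
      fix i
      have "f (Inl i) \<le> e (u,v) (Inl i)" "f (Inr i) \<le> e (u,v) (Inr i)" using f(2) by auto
      then show "Poly_Mapping.lookup (fst p) i \<le> Poly_Mapping.lookup u i \<and> Poly_Mapping.lookup (snd p) i \<le> Poly_Mapping.lookup v i"
        using p(2) by (simp add: e_def)
    qed
    ultimately show "\<exists>(u',v')\<in>F. \<forall>i. Poly_Mapping.lookup u' i \<le> Poly_Mapping.lookup u i \<and> Poly_Mapping.lookup v' i \<le> Poly_Mapping.lookup v i"
      by (intro bexI[of _ p]) auto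
  qed
  show ?thesis by (rule exI[of _ F], intro conjI c1 c2 c3)
qed

lemma phi_diff: "phi h (f - g) = phi h f - phi h (g :: ('n \<Rightarrow>\<^sub>0 nat) \<Rightarrow>\<^sub>0 'k::comm_ring_1)"
  using phi_add[of h "f - g" g] by (simp add: algebra_simps)

lemma binom_in_toric:
  assumes "lin_img A u = lin_img A v"
  shows "(mono u - mono v :: ('n::finite, 'k::field) mpoly) \<in> toric_ideal A"
  using assms by (simp add: toric_phi mono_def phi_diff)

lemma binom_toric_D:
  assumes "(mono u - mono v :: ('n::finite, 'k::field) mpoly) \<in> toric_ideal A"
  shows "lin_img A u = lin_img A v"
proof -
  have "phi (lin_img A) (mono u - mono v :: ('n, 'k) mpoly) = 0" using assms by (simp add: toric_phi)
  then have "Poly_Mapping.single (lin_img A u) (1::'k) - Poly_Mapping.single (lin_img A v) 1 = 0"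
    by (simp add: mono_def phi_diff)
  then have "Poly_Mapping.lookup (Poly_Mapping.single (lin_img A u) (1::'k) - Poly_Mapping.single (lin_img A v) 1) (lin_img A u) = 0"
    by simp
  then show ?thesis by (auto simp: lookup_minus lookup_single when_def split: if_splits)
qed

lemma is_ideal_gen: "is_ideal (ideal_gen S)"
  unfolding is_ideal_def ideal_gen_def by auto

lemma gen_superset: "S \<subseteq> ideal_gen S"
  unfolding ideal_gen_def by auto

lemma gen_least: "is_ideal J \<Longrightarrow> S \<subseteq> J \<Longrightarrow> ideal_gen S \<subseteq> J"
  unfolding ideal_gen_def by auto

lemma ideal_diff: "is_ideal J \<Longrightarrow> a \<in> J \<Longrightarrow> b \<in> J \<Longrightarrow> a - b \<in> J"
  unfolding is_ideal_def by (metis diff_conv_add_uminus mult_minus1)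

lemma ideal_mult: "is_ideal J \<Longrightarrow> a \<in> J \<Longrightarrow> r * a \<in> J"
  unfolding is_ideal_def by blast

lemma ideal_add: "is_ideal J \<Longrightarrow> a \<in> J \<Longrightarrow> b \<in> J \<Longrightarrow> a + b \<in> J"
  unfolding is_ideal_def by blast

lemma ideal_zero: "is_ideal J \<Longrightarrow> 0 \<in> J"
  unfolding is_ideal_def by blast

lemma mono_add: "(mono (a + b) :: ('n, 'k::field) mpoly) = mono a * mono b"
  by (simp add: mono_def mult_single)

definition sz :: "('n::finite \<Rightarrow>\<^sub>0 nat) \<Rightarrow> ('n \<Rightarrow>\<^sub>0 nat) \<Rightarrow> nat" where
  "sz u v = (\<Sum>i\<in>UNIV. Poly_Mapping.lookup u i + Poly_Mapping.lookup v i)"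

lemma binomials_in_gen:
  fixes A :: "'n::finite \<Rightarrow> 'm \<Rightarrow> int"
  assumes F: "F \<subseteq> {(u,v). lin_img A u = lin_img A v \<and> (u,v) \<noteq> (0,0)}"
    and dom: "\<forall>(u,v)\<in>{(u,v). lin_img A u = lin_img A v \<and> (u,v) \<noteq> (0,0)}. \<exists>(u',v')\<in>F. \<forall>i. Poly_Mapping.lookup u' i \<le> Poly_Mapping.lookup u i \<and> Poly_Mapping.lookup v' i \<le> Poly_Mapping.lookup v i"
    and luv: "lin_img A u = lin_img A v"
  shows "(mono u - mono v :: ('n, 'k::field) mpoly) \<in> ideal_gen ((\<lambda>(u,v). mono u - mono v) ` F)"
  using luv
proof (induction "sz u v" arbitrary: u v rule: less_induct)
  case less
  let ?J = "ideal_gen ((\<lambda>(u,v). mono u - mono v) ` F) :: ('n, 'k) mpoly set"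
  have J: "is_ideal ?J" by (rule is_ideal_gen)
  show ?case
  proof (cases "(u,v) = (0,0)")
    case True then show ?thesis using ideal_zero[OF J] by simp
  next
    case False
    with less.prems obtain u' v' where uv': "(u',v') \<in> F"
      "\<forall>i. Poly_Mapping.lookup u' i \<le> Poly_Mapping.lookup u i \<and> Poly_Mapping.lookup v' i \<le> Poly_Mapping.lookup v i"
      using dom by blast
    have l': "lin_img A u' = lin_img A v'" and nz: "(u',v') \<noteq> (0,0)" using uv'(1) F by auto
    define u'' where "u'' = u - u'"
    define v'' where "v'' = v - v'"
    have uu: "u = u' + u''" unfolding u''_def
      by (rule poly_mapping_eqI) (use uv'(2) in \<open>simp add: lookup_add lookup_minus\<close>)
    have vv: "v = v' + v''" unfolding v''_def
      by (rule poly_mapping_eqI) (use uv'(2) in \<open>simp add: lookup_add lookup_minus\<close>)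
    have l'': "lin_img A u'' = lin_img A v''"
      using less.prems l' unfolding uu vv lin_img_add by simp
    have "sz u' v' > 0"
    proof (rule ccontr)
      assume "\<not> sz u' v' > 0"
      then have "\<forall>i. Poly_Mapping.lookup u' i + Poly_Mapping.lookup v' i = 0"
        by (simp add: sz_def)
      then have "u' = 0" "v' = 0" by (auto intro!: poly_mapping_eqI)
      with nz show False by simp
    qed
    moreover have "sz u v = sz u' v' + sz u'' v''"
      unfolding sz_def uu vv by (simp add: lookup_add sum.distrib[symmetric] algebra_simps)
    ultimately have "sz u'' v'' < sz u v" by simp
    then have IH: "(mono u'' - mono v'' :: ('n, 'k) mpoly) \<in> ?J"
      using less.hyps l'' by blast
    have B: "(mono u' - mono v' :: ('n, 'k) mpoly) \<in> ?J"
      using uv'(1) gen_superset by fastforce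
    have eq: "(mono u - mono v :: ('n, 'k) mpoly) = mono u'' * (mono u' - mono v') + mono v' * (mono u'' - mono v'')"
      unfolding uu vv mono_add by (simp add: algebra_simps)
    show ?thesis unfolding eq
      by (intro ideal_add[OF J] ideal_mult[OF J] IH B)
  qed
qed

lemma toric_in_gen:
  fixes A :: "'n::finite \<Rightarrow> 'm \<Rightarrow> int" and J :: "('n, 'k::field) mpoly set"
  assumes J: "is_ideal J"
    and binJ: "\<And>u v. lin_img A u = lin_img A v \<Longrightarrow> (mono u - mono v :: ('n, 'k) mpoly) \<in> J"
    and f: "f \<in> toric_ideal A"
  shows "f \<in> J"
  using f
proof (induction "card (Poly_Mapping.keys f)" arbitrary: f rule: less_induct)
  case less
  show ?case
  proof (cases "f = 0")
    case True then show ?thesis using ideal_zero[OF J] by simp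
  next
    case False
    have "\<exists>\<alpha>. \<alpha> \<in> Poly_Mapping.keys f"
    proof (rule ccontr)
      assume "\<not> (\<exists>\<alpha>. \<alpha> \<in> Poly_Mapping.keys f)"
      then have "f = 0" by (intro poly_mapping_eqI) (simp add: in_keys_iff)
      with False show False by simp
    qed
    then obtain \<alpha> where a: "\<alpha> \<in> Poly_Mapping.keys f" by blast
    let ?Fb = "{\<beta>\<in>Poly_Mapping.keys f. lin_img A \<beta> = lin_img A \<alpha>}"
    have s0: "(\<Sum>\<beta>\<in>?Fb. Poly_Mapping.lookup f \<beta>) = 0"
      using less.prems unfolding toric_ideal_def by blast
    have "\<exists>\<beta>\<in>?Fb. \<beta> \<noteq> \<alpha>"
    proof (rule ccontr)
      assume "\<not> (\<exists>\<beta>\<in>?Fb. \<beta> \<noteq> \<alpha>)"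
      then have "?Fb = {\<alpha>}" using a by auto
      then show False using s0 a by (simp add: in_keys_iff)
    qed
    then obtain \<beta> where b: "\<beta> \<in> Poly_Mapping.keys f" "lin_img A \<beta> = lin_img A \<alpha>" "\<beta> \<noteq> \<alpha>" by auto
    define c where "c = Poly_Mapping.lookup f \<alpha>"
    define g where "g = f - Poly_Mapping.single 0 c * (mono \<alpha> - mono \<beta>)"
    have bin: "(mono \<alpha> - mono \<beta> :: ('n, 'k) mpoly) \<in> toric_ideal A"
      using b(2) binom_in_toric by metis
    have gI: "g \<in> toric_ideal A" unfolding g_def
      by (intro ideal_diff[OF is_ideal_toric] ideal_mult[OF is_ideal_toric] less.prems bin)
    have lg: "Poly_Mapping.lookup g \<gamma> = Poly_Mapping.lookup f \<gamma> - (c when \<gamma> = \<alpha>) + (c when \<gamma> = \<beta>)" for \<gamma>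
      unfolding g_def mono_def by (simp add: algebra_simps mult_single lookup_minus lookup_add lookup_single) (simp add: when_def)
    have "Poly_Mapping.keys g \<subseteq> Poly_Mapping.keys f - {\<alpha>}"
    proof
      fix \<gamma> assume "\<gamma> \<in> Poly_Mapping.keys g"
      then have "Poly_Mapping.lookup g \<gamma> \<noteq> 0" by (simp add: in_keys_iff)
      then show "\<gamma> \<in> Poly_Mapping.keys f - {\<alpha>}"
        using b lg[of \<gamma>] by (auto simp: when_def c_def in_keys_iff split: if_splits)
    qed
    then have "Poly_Mapping.keys g \<subset> Poly_Mapping.keys f" using a by blast
    then have "card (Poly_Mapping.keys g) < card (Poly_Mapping.keys f)"
      by (rule psubset_card_mono[OF finite_keys])
    then have "g \<in> J" using less.hyps gI by blast
    moreover have "Poly_Mapping.single 0 c * (mono \<alpha> - mono \<beta>) \<in> J"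
      using ideal_mult[OF J binJ[OF b(2)[symmetric]]] .
    moreover have "f = g + Poly_Mapping.single 0 c * (mono \<alpha> - mono \<beta>)" by (simp add: g_def)
    ultimately show ?thesis using ideal_add[OF J] by metis
  qed
qed

lemma toric_witness:
  fixes A :: "'n::finite \<Rightarrow> 'm::finite \<Rightarrow> int"
  shows "\<exists>Bs. (\<forall>B\<in>set Bs. is_binomial B \<and> B \<in> (toric_ideal A :: ('n, 'k::field) mpoly set))
           \<and> (toric_ideal A :: ('n, 'k) mpoly set) = rad (ideal_gen (set Bs))"
proof -
  let ?T = "{(u,v). lin_img A u = lin_img A v \<and> (u,v) \<noteq> (0,0)}"
  obtain F where F: "F \<subseteq> ?T" "finite F"
    "\<forall>(u,v)\<in>?T. \<exists>(u',v')\<in>F. \<forall>i. Poly_Mapping.lookup u' i \<le> Poly_Mapping.lookup u i \<and> Poly_Mapping.lookup v' i \<le> Poly_Mapping.lookup v i"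
    using dickson_pairs[of ?T] by blast
  define BS :: "('n, 'k) mpoly set" where "BS = (\<lambda>(u,v). mono u - mono v) ` F"
  obtain Bs where Bs: "set Bs = BS" using F(2) finite_list[of BS] by (auto simp: BS_def)
  have BSI: "BS \<subseteq> toric_ideal A"
    using F(1) by (auto simp: BS_def intro: binom_in_toric)
  have bin: "\<forall>B\<in>set Bs. is_binomial B" by (auto simp: Bs BS_def is_binomial_def)
  have "toric_ideal A \<subseteq> ideal_gen BS"
  proof
    fix f :: "('n, 'k) mpoly" assume fI: "f \<in> toric_ideal A"
    have bj: "\<And>u v. lin_img A u = lin_img A v \<Longrightarrow> (mono u - mono v :: ('n, 'k) mpoly) \<in> ideal_gen BS"
      using binomials_in_gen[OF F(1) F(3)] by (simp add: BS_def)
    show "f \<in> ideal_gen BS"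
      by (rule toric_in_gen[OF is_ideal_gen bj fI])
  qed
  have 1: "toric_ideal A \<subseteq> rad (ideal_gen BS)"
  proof
    fix f :: "('n, 'k) mpoly" assume "f \<in> toric_ideal A"
    then have "f ^ 1 \<in> ideal_gen BS" using \<open>toric_ideal A \<subseteq> ideal_gen BS\<close> by auto
    then show "f \<in> rad (ideal_gen BS)" unfolding rad_def by blast
  qed
  have "ideal_gen BS \<subseteq> toric_ideal A" by (rule gen_least[OF is_ideal_toric BSI])
  then have 2: "rad (ideal_gen BS) \<subseteq> toric_ideal A"
    unfolding rad_def using toric_radical by blast
  show ?thesis using 1 2 bin BSI Bs by (intro exI[of _ Bs]) auto
qed

lemma bar_witness:
  fixes A :: "'n::finite \<Rightarrow> 'm::finite \<Rightarrow> int"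
  shows "\<exists>Bs. length Bs = bar (toric_ideal A :: ('n, 'k::field) mpoly set)
           \<and> (\<forall>B\<in>set Bs. is_binomial B \<and> B \<in> (toric_ideal A :: ('n, 'k) mpoly set))
           \<and> (toric_ideal A :: ('n, 'k) mpoly set) = rad (ideal_gen (set Bs))"
  unfolding bar_def by (rule LeastI_ex) (use toric_witness[of A] in blast)

lemma sum_fun_apply: "(\<Sum>i\<in>S. f i) x = (\<Sum>i\<in>S. f i x)"
  by (induction S rule: infinite_finite_induct) auto

lemma vs_fun: "vector_space (\<lambda>(c::rat) (v::'n \<Rightarrow> rat) i. c * v i)"
  by unfold_locales (auto simp: fun_eq_iff algebra_simps)

lemma vs_rat: "vector_space ((*) :: rat \<Rightarrow> rat \<Rightarrow> rat)"
  by unfold_locales (auto simp: algebra_simps)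

lemma functional_exists:
  fixes D :: "('n::finite \<Rightarrow> rat) set" and K :: "('n \<Rightarrow> rat) set"
  assumes fin: "finite D" and lt: "card D < vector_space.dim (\<lambda>(c::rat) v i. c * v i) K"
  shows "\<exists>z\<in>K. \<exists>w::'n \<Rightarrow> rat. (\<forall>d\<in>D. (\<Sum>i\<in>UNIV. d i * w i) = 0) \<and> (\<Sum>i\<in>UNIV. z i * w i) \<noteq> 0"
proof -
  interpret V: vector_space "\<lambda>(c::rat) (v::'n \<Rightarrow> rat) i. c * v i" by (rule vs_fun)
  interpret P: vector_space_pair "\<lambda>(c::rat) (v::'n \<Rightarrow> rat) i. c * v i" "(*) :: rat \<Rightarrow> rat \<Rightarrow> rat"
    by (intro vector_space_pair.intro vs_fun vs_rat)
  have "\<not> K \<subseteq> V.span D"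
  proof
    assume "K \<subseteq> V.span D"
    then have "V.dim K \<le> card D" by (rule V.dim_le_card[OF _ fin])
    with lt show False by simp
  qed
  then obtain z where z: "z \<in> K" "z \<notin> V.span D" by blast
  obtain B where B: "B \<subseteq> D" "V.independent B" "D \<subseteq> V.span B"
    using V.maximal_independent_subset[of D] by blast
  have "z \<notin> V.span B" using z(2) V.span_mono[OF B(1)] by blast
  then have ind: "V.independent (insert z B)" by (rule V.independent_insertI[OF _ B(2)])
  obtain g where g: "Vector_Spaces.linear (\<lambda>(c::rat) (v::'n \<Rightarrow> rat) i. c * v i) ((*) :: rat \<Rightarrow> rat \<Rightarrow> rat) g"
    "\<forall>x\<in>insert z B. g x = (if x = z then 1 else 0)"
    using P.linear_independent_extend[OF ind, of "\<lambda>x. if x = z then 1 else 0"] by blast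
  have gB: "\<And>x. x \<in> B \<Longrightarrow> g x = 0" using g(2) \<open>z \<notin> V.span B\<close> V.span_base by fastforce
  have gz: "g z = 1" using g(2) by simp
  have gD: "g d = 0" if "d \<in> D" for d
    using P.linear_eq_0_on_span[OF g(1) gB] B(3) that by blast
  define w where "w i = g (\<lambda>j. if j = i then 1 else 0)" for i
  have rep: "x = (\<Sum>i\<in>UNIV. (\<lambda>j. x i * (if j = i then 1 else 0)))" for x :: "'n \<Rightarrow> rat"
    by (auto simp: fun_eq_iff sum_fun_apply if_distrib cong: if_cong)
  have gx: "g x = (\<Sum>i\<in>UNIV. x i * w i)" for x
  proof -
    have "g x = g (\<Sum>i\<in>UNIV. (\<lambda>j. x i * (if j = i then 1 else 0)))" using rep[of x] by simp
    also have "\<dots> = (\<Sum>i\<in>UNIV. g (\<lambda>j. x i * (if j = i then 1 else 0)))"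
      by (rule P.linear_sum[OF g(1)])
    also have "\<dots> = (\<Sum>i\<in>UNIV. x i * w i)"
      using P.linear_scale[OF g(1)] by (simp add: w_def)
    finally show ?thesis .
  qed
  show ?thesis
    using z(1) gD gz by (intro bexI[of _ z] exI[of _ w]) (auto simp: gx)
qed

lemma int_scale_set:
  fixes f :: "'a \<Rightarrow> rat"
  assumes "finite I"
  shows "\<exists>d::int. d > 0 \<and> (\<forall>i\<in>I. of_int d * f i \<in> \<int>)"
  using assms
proof (induction I rule: finite_induct)
  case empty then show ?case by (intro exI[of _ 1]) simp
next
  case (insert x I)
  then obtain d :: int where d: "d > 0" "\<forall>i\<in>I. of_int d * f i \<in> \<int>" by blast
  obtain a b where ab: "f x = Fract a b" "b > 0" by (cases "f x") blast
  have fx: "f x = of_int a / of_int b" using ab(1) by (simp add: Fract_of_int_quotient)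
  have eq: "of_int (d * b) * f x = (of_int (d * a) :: rat)" using ab(2) fx by simp
  have hx: "of_int (d * b) * f x \<in> \<int>" unfolding eq by (rule Ints_of_int)
  have hI: "\<forall>i\<in>I. of_int (d * b) * f i \<in> \<int>"
  proof
    fix i assume that: "i \<in> I"
    have e: "of_int (d * b) * f i = of_int b * (of_int d * f i)" by simp
    have "of_int d * f i \<in> \<int>" using d(2) that by blast
    then show "of_int (d * b) * f i \<in> \<int>" unfolding e by (rule Ints_mult[OF Ints_of_int])
  qed
  have pos: "d * b > 0" using d(1) ab(2) by simp
  show ?case using hx hI pos by blast
qed

lemma int_scale:
  fixes f :: "'n::finite \<Rightarrow> rat"
  shows "\<exists>F::'n \<Rightarrow> int. \<exists>d::int. d > 0 \<and> (\<forall>i. of_int (F i) = of_int d * f i)"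
proof -
  obtain d :: int where d: "d > 0" "\<forall>i\<in>UNIV. of_int d * f i \<in> \<int>"
    using int_scale_set[of "UNIV :: 'n set" f] by auto
  have "\<forall>i. \<exists>n::int. of_int n = of_int d * f i"
  proof
    fix i
    have "of_int d * f i \<in> \<int>" using d(2) by simp
    then obtain n where "of_int d * f i = of_int n" by (rule Ints_cases)
    then show "\<exists>n::int. of_int n = of_int d * f i" by (intro exI[of _ n]) simp
  qed
  from choice[OF this] obtain F where "\<forall>i. of_int (F i) = of_int d * f i" by blast
  then show ?thesis using d(1) by blast
qed

lemma toric_mono:
  fixes A :: "'n::finite \<Rightarrow> 'm \<Rightarrow> int" and A' :: "'n \<Rightarrow> 'm2 \<Rightarrow> int"
  assumes fib: "\<And>a b. lin_img A' a = lin_img A' b \<Longrightarrow> lin_img A a = lin_img A b"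
  shows "(toric_ideal A' :: ('n, 'k::field) mpoly set) \<subseteq> toric_ideal A"
proof
  fix f :: "('n, 'k) mpoly" assume f: "f \<in> toric_ideal A'"
  show "f \<in> toric_ideal A"
    unfolding toric_ideal_def
  proof (safe)
    fix b
    let ?S = "{\<alpha>\<in>Poly_Mapping.keys f. lin_img A \<alpha> = b}"
    have "(\<Sum>\<alpha>\<in>?S. Poly_Mapping.lookup f \<alpha>) =
      (\<Sum>c\<in>lin_img A' ` ?S. \<Sum>\<alpha>\<in>{x. x \<in> ?S \<and> lin_img A' x = c}. Poly_Mapping.lookup f \<alpha>)"
      by (rule sum.image_gen) simp
    also have "\<dots> = (\<Sum>c\<in>lin_img A' ` ?S. 0)"
    proof (rule sum.cong[OF refl])
      fix c assume "c \<in> lin_img A' ` ?S"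
      then obtain \<beta> where \<beta>: "\<beta> \<in> ?S" "c = lin_img A' \<beta>" by blast
      have "{x. x \<in> ?S \<and> lin_img A' x = c} = {\<alpha>\<in>Poly_Mapping.keys f. lin_img A' \<alpha> = c}"
      proof (rule set_eqI, rule iffI)
        fix x assume "x \<in> {\<alpha>\<in>Poly_Mapping.keys f. lin_img A' \<alpha> = c}"
        then have x: "x \<in> Poly_Mapping.keys f" "lin_img A' x = lin_img A' \<beta>" using \<beta>(2) by auto
        have "lin_img A x = lin_img A \<beta>" by (rule fib[OF x(2)])
        then show "x \<in> {x. x \<in> ?S \<and> lin_img A' x = c}" using x \<beta> by simp
      qed simp
      then show "(\<Sum>\<alpha>\<in>{x. x \<in> ?S \<and> lin_img A' x = c}. Poly_Mapping.lookup f \<alpha>) = 0"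
        using f unfolding toric_ideal_def by simp
    qed
    finally show "(\<Sum>\<alpha>\<in>?S. Poly_Mapping.lookup f \<alpha>) = 0" by simp
  qed
qed

lemma lookup_Abs_fin: "Poly_Mapping.lookup (Abs_poly_mapping (f :: 'n::finite \<Rightarrow> nat)) = f"
  by simp

lemma split_config:
  fixes A :: "'n::finite \<Rightarrow> 'm::finite \<Rightarrow> int" and G :: "('n, 'k::field) mpoly list"
  assumes pA: "pointed_config A" and len: "length G < toric_height A"
    and GB: "\<forall>B\<in>set G. is_binomial B \<and> B \<in> toric_ideal A"
  shows "\<exists>(A'::'n \<Rightarrow> nat \<Rightarrow> int) m'. (\<forall>i j. m' \<le> j \<longrightarrow> A' i j = 0) \<and> pointed_config A'
     \<and> set G \<subseteq> toric_ideal A' \<and> toric_ideal A' \<subseteq> (toric_ideal A :: ('n, 'k) mpoly set) \<and> toric_ideal A' \<noteq> (toric_ideal A :: ('n, 'k) mpoly set)"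
proof -
  have "\<forall>B\<in>set G. \<exists>p. B = mono (fst p) - mono (snd p)"
    using GB unfolding is_binomial_def by auto
  from bchoice[OF this] obtain P where P: "\<forall>B\<in>set G. B = mono (fst (P B)) - mono (snd (P B))"
    by blast
  define dv :: "('n, 'k) mpoly \<Rightarrow> 'n \<Rightarrow> rat" where
    "dv B = (\<lambda>i. of_nat (Poly_Mapping.lookup (fst (P B)) i) - of_nat (Poly_Mapping.lookup (snd (P B)) i))" for B
  define D where "D = dv ` set G"
  have finD: "finite D" by (simp add: D_def)
  have "card D \<le> length G" unfolding D_def
    using card_image_le[of "set G" dv] card_length[of G] by simp
  then have "card D < vector_space.dim (\<lambda>(c::rat) v i. c * v i) (kerQ A)"
    using len unfolding toric_height_def by simp
  from functional_exists[OF finD this] obtain z w where zw: "z \<in> kerQ A"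
    "\<forall>d\<in>D. (\<Sum>i\<in>UNIV. d i * w i) = 0" "(\<Sum>i\<in>UNIV. z i * w i) \<noteq> 0" by blast
  obtain W :: "'n \<Rightarrow> int" and dw :: int where W: "dw > 0" "\<forall>i. of_int (W i) = of_int dw * w i"
    using int_scale[of w] by blast
  obtain Z :: "'n \<Rightarrow> int" and dz :: int where Z: "dz > 0" "\<forall>i. of_int (Z i) = of_int dz * z i"
    using int_scale[of z] by blast
  have ZW: "(\<Sum>i\<in>UNIV. Z i * W i) \<noteq> 0"
  proof
    assume "(\<Sum>i\<in>UNIV. Z i * W i) = 0"
    then have "(of_int (\<Sum>i\<in>UNIV. Z i * W i) :: rat) = 0" by simp
    then have "(\<Sum>i\<in>UNIV. (of_int dz * of_int dw) * (z i * w i)) = (0::rat)"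
      using Z(2) W(2) by (simp add: algebra_simps)
    then have "(of_int dz * of_int dw) * (\<Sum>i\<in>UNIV. z i * w i) = (0::rat)"
      by (simp add: sum_distrib_left)
    then show False using Z(1) W(1) zw(3) by simp
  qed
  have ZA: "(\<Sum>i\<in>UNIV. Z i * A i m) = 0" for m
  proof -
    have "(\<Sum>i\<in>UNIV. z i * of_int (A i m)) = 0" using zw(1) unfolding kerQ_def by blast
    then have "of_int dz * (\<Sum>i\<in>UNIV. z i * of_int (A i m)) = (0::rat)" by simp
    then have "(\<Sum>i\<in>UNIV. of_int (Z i) * of_int (A i m)) = (0::rat)"
      using Z(2) by (simp add: sum_distrib_left algebra_simps)
    then have "(of_int (\<Sum>i\<in>UNIV. Z i * A i m) :: rat) = 0" by simp
    then show ?thesis by (simp only: of_int_eq_0_iff)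
  qed
  have DW: "(\<Sum>i\<in>UNIV. int (Poly_Mapping.lookup (fst (P B)) i) * W i) = (\<Sum>i\<in>UNIV. int (Poly_Mapping.lookup (snd (P B)) i) * W i)"
    if B: "B \<in> set G" for B
  proof -
    have "(\<Sum>i\<in>UNIV. dv B i * w i) = 0" using zw(2) B by (auto simp: D_def)
    then have "of_int dw * (\<Sum>i\<in>UNIV. dv B i * w i) = (0::rat)" by simp
    then have "(\<Sum>i\<in>UNIV. (of_nat (Poly_Mapping.lookup (fst (P B)) i) - of_nat (Poly_Mapping.lookup (snd (P B)) i)) * of_int (W i)) = (0::rat)"
      using W(2) by (simp add: sum_distrib_left algebra_simps dv_def)
    then have "(of_int (\<Sum>i\<in>UNIV. (int (Poly_Mapping.lookup (fst (P B)) i) - int (Poly_Mapping.lookup (snd (P B)) i)) * W i) :: rat) = 0"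
      by simp
    then have "(\<Sum>i\<in>UNIV. (int (Poly_Mapping.lookup (fst (P B)) i) - int (Poly_Mapping.lookup (snd (P B)) i)) * W i) = 0"
      by (simp only: of_int_eq_0_iff)
    then show ?thesis by (simp add: algebra_simps sum_subtractf)
  qed
  obtain N :: nat and g :: "nat \<Rightarrow> 'm" where gN: "(UNIV :: 'm set) = g ` {i. i < N}"
    using finite_imp_nat_seg_image_inj_on[OF finite_UNIV[where 'a='m]] by blast
  define A' :: "'n \<Rightarrow> nat \<Rightarrow> int" where
    "A' i j = (if j = 0 then W i else if j \<le> N then A i (g (j - 1)) else 0)" for i j
  have A'00: "A' i 0 = W i" for i by (simp add: A'_def)
  have A'Suc: "A' i (Suc k) = (if k < N then A i (g k) else 0)" for i k by (simp add: A'_def)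
  have A'0: "(\<Sum>i\<in>UNIV. c i * A' i 0) = (\<Sum>i\<in>UNIV. c i * W i)" for c
    by (simp add: A'_def)
  have A'S: "(\<Sum>i\<in>UNIV. c i * A' i (Suc j)) = (\<Sum>i\<in>UNIV. c i * A i (g j))" if "j < N" for c j
    using that by (simp add: A'_def)
  have genm: "\<exists>j<N. g j = m" for m
  proof -
    have "m \<in> g ` {i. i < N}" using gN by blast
    then show ?thesis by auto
  qed
  have supp: "\<forall>i j. Suc N \<le> j \<longrightarrow> A' i j = 0" by (simp add: A'_def)
  have fib: "lin_img A a = lin_img A b" if "lin_img A' a = lin_img A' b" for a b
  proof
    fix m
    obtain j where j: "j < N" "g j = m" using genm by blast
    have "lin_img A' a (Suc j) = lin_img A' b (Suc j)" using that by simp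
    then show "lin_img A a m = lin_img A b m"
      using A'S[OF j(1)] j(2) by (simp add: lin_img_def)
  qed
  have pointed: "pointed_config A'"
    unfolding pointed_config_def
  proof (rule allI, rule impI)
    fix u :: "'n \<Rightarrow> nat"
    assume H: "\<forall>j. (\<Sum>i\<in>UNIV. int (u i) * A' i j) = 0"
    have "\<forall>m. (\<Sum>i\<in>UNIV. int (u i) * A i m) = 0"
    proof
      fix m
      obtain j where j: "j < N" "g j = m" using genm by blast
      show "(\<Sum>i\<in>UNIV. int (u i) * A i m) = 0"
        using H[rule_format, of "Suc j"] A'S[OF j(1), of "\<lambda>i. int (u i)"] j(2) by simp
    qed
    then show "\<forall>i. u i = 0" using pA unfolding pointed_config_def by blast
  qed
  have sub: "(toric_ideal A' :: ('n, 'k) mpoly set) \<subseteq> toric_ideal A"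
    by (rule toric_mono) (rule fib)
  have Gsub: "set G \<subseteq> toric_ideal A'"
  proof
    fix B assume B: "B \<in> set G"
    define a where "a = fst (P B)"
    define b where "b = snd (P B)"
    have Beq: "B = mono a - mono b" unfolding a_def b_def by (rule bspec[OF P B])
    have DWB: "(\<Sum>i\<in>UNIV. int (Poly_Mapping.lookup a i) * W i) = (\<Sum>i\<in>UNIV. int (Poly_Mapping.lookup b i) * W i)"
      unfolding a_def b_def by (rule DW[OF B])
    have "B \<in> toric_ideal A" using GB B by blast
    then have "mono a - mono b \<in> (toric_ideal A :: ('n, 'k) mpoly set)"
      using Beq by simp
    then have "lin_img A a = lin_img A b"
      by (rule binom_toric_D)
    then have "lin_img A' a = lin_img A' b"
    proof -
      assume LA: "lin_img A a = lin_img A b"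
      show ?thesis
      proof
        fix j
        show "lin_img A' a j = lin_img A' b j"
        proof (cases j)
          case 0 then show ?thesis using DWB by (simp add: lin_img_def A'00)
        next
          case (Suc k)
          show ?thesis
          proof (cases "k < N")
            case True
            have "lin_img A a (g k) = lin_img A b (g k)" using LA by simp
            then show ?thesis using Suc True by (simp add: lin_img_def A'Suc)
          next
            case False then show ?thesis using Suc by (simp add: lin_img_def A'Suc)
          qed
        qed
      qed
    qed
    then show "B \<in> toric_ideal A'" unfolding Beq by (rule binom_in_toric)
  qed
  define u :: "'n \<Rightarrow>\<^sub>0 nat" where "u = Abs_poly_mapping (\<lambda>i. nat (Z i))"
  define v :: "'n \<Rightarrow>\<^sub>0 nat" where "v = Abs_poly_mapping (\<lambda>i. nat (- Z i))"
  have Zuv: "int (Poly_Mapping.lookup u i) - int (Poly_Mapping.lookup v i) = Z i" for i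
    by (simp add: u_def v_def)
  have "lin_img A u = lin_img A v"
  proof
    fix m
    have "lin_img A u m - lin_img A v m = (\<Sum>i\<in>UNIV. (int (Poly_Mapping.lookup u i) - int (Poly_Mapping.lookup v i)) * A i m)"
      by (simp add: lin_img_def sum_subtractf algebra_simps)
    also have "\<dots> = 0" using ZA[of m] by (simp add: Zuv)
    finally show "lin_img A u m = lin_img A v m" by simp
  qed
  then have in1: "(mono u - mono v :: ('n, 'k) mpoly) \<in> toric_ideal A" by (rule binom_in_toric)
  have "lin_img A' u 0 \<noteq> lin_img A' v 0"
  proof
    assume "lin_img A' u 0 = lin_img A' v 0"
    then have "lin_img A' u 0 - lin_img A' v 0 = 0" by simp
    moreover have "lin_img A' u 0 - lin_img A' v 0 = (\<Sum>i\<in>UNIV. (int (Poly_Mapping.lookup u i) - int (Poly_Mapping.lookup v i)) * W i)"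
      by (simp add: lin_img_def A'00 sum_subtractf algebra_simps)
    ultimately show False using ZW by (simp add: Zuv)
  qed
  then have "(mono u - mono v :: ('n, 'k) mpoly) \<notin> toric_ideal A'"
  proof (intro notI)
    assume "(mono u - mono v :: ('n, 'k) mpoly) \<in> toric_ideal A'"
    then have "lin_img A' u = lin_img A' v" by (rule binom_toric_D)
    moreover assume "lin_img A' u 0 \<noteq> lin_img A' v 0"
    ultimately show False by simp
  qed
  with in1 have ne: "(toric_ideal A' :: ('n, 'k) mpoly set) \<noteq> toric_ideal A" by blast
  show ?thesis
    by (rule exI[of _ A'], rule exI[of _ "Suc N"], intro conjI supp pointed Gsub sub ne)
qed

lemma is_ideal_sum:
  assumes "is_ideal I" "is_ideal J"
  shows "is_ideal (ideal_sum I J)"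
  unfolding is_ideal_def ideal_sum_def
proof (intro conjI ballI allI)
  show "0 \<in> {a + b |a b. a \<in> I \<and> b \<in> J}"
    using ideal_zero[OF assms(1)] ideal_zero[OF assms(2)] by force
next
  fix x y assume "x \<in> {a + b |a b. a \<in> I \<and> b \<in> J}" "y \<in> {a + b |a b. a \<in> I \<and> b \<in> J}"
  then obtain a b c d where "x = a + b" "y = c + d" "a \<in> I" "b \<in> J" "c \<in> I" "d \<in> J" by blast
  then show "x + y \<in> {a + b |a b. a \<in> I \<and> b \<in> J}"
    using ideal_add[OF assms(1)] ideal_add[OF assms(2)]
    by (intro CollectI exI[of _ "a + c"] exI[of _ "b + d"]) (simp add: algebra_simps)
next
  fix r x assume "x \<in> {a + b |a b. a \<in> I \<and> b \<in> J}"
  then obtain a b where "x = a + b" "a \<in> I" "b \<in> J" by blast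
  then show "r * x \<in> {a + b |a b. a \<in> I \<and> b \<in> J}"
    using ideal_mult[OF assms(1)] ideal_mult[OF assms(2)]
    by (intro CollectI exI[of _ "r * a"] exI[of _ "r * b"]) (simp add: algebra_simps)
qed

theorem theorem2p5:
  fixes A :: "'n::finite \<Rightarrow> 'm::finite \<Rightarrow> int"
    and r :: nat
  assumes "pointed_config A"
    and "toric_height A = r"
    and "r \<ge> 3"
    and "bar (toric_ideal A :: ('n, 'k::field) mpoly set) \<le> 2 * r - 2"
  shows "radical_splittable (toric_ideal A :: ('n, 'k) mpoly set)"
proof -
  let ?I = "toric_ideal A :: ('n, 'k) mpoly set"
  obtain Bs where Bs: "length Bs = bar ?I" "\<forall>B\<in>set Bs. is_binomial B \<and> B \<in> ?I"
    "?I = rad (ideal_gen (set Bs))"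
    using bar_witness[of A] by blast
  define G1 where "G1 = take (r - 1) Bs"
  define G2 where "G2 = drop (r - 1) Bs"
  have l1: "length G1 < toric_height A" using assms(2,3) by (simp add: G1_def)
  have l2: "length G2 < toric_height A" using assms(2,3,4) Bs(1) by (simp add: G2_def)
  have setBs: "set Bs = set G1 \<union> set G2"
    unfolding G1_def G2_def by (metis append_take_drop_id set_append)
  have g1: "\<forall>B\<in>set G1. is_binomial B \<and> B \<in> ?I" using Bs(2) setBs by blast
  have g2: "\<forall>B\<in>set G2. is_binomial B \<and> B \<in> ?I" using Bs(2) setBs by blast
  obtain A1 :: "'n \<Rightarrow> nat \<Rightarrow> int" and m1 where A1: "\<forall>i j. m1 \<le> j \<longrightarrow> A1 i j = 0" "pointed_config A1"
    "set G1 \<subseteq> toric_ideal A1" "toric_ideal A1 \<subseteq> ?I" "toric_ideal A1 \<noteq> ?I"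
    using split_config[OF assms(1) l1 g1] by blast
  obtain A2 :: "'n \<Rightarrow> nat \<Rightarrow> int" and m2 where A2: "\<forall>i j. m2 \<le> j \<longrightarrow> A2 i j = 0" "pointed_config A2"
    "set G2 \<subseteq> toric_ideal A2" "toric_ideal A2 \<subseteq> ?I" "toric_ideal A2 \<noteq> ?I"
    using split_config[OF assms(1) l2 g2] by blast
  let ?S = "ideal_sum (toric_ideal A1) (toric_ideal A2) :: ('n, 'k) mpoly set"
  have Sid: "is_ideal ?S" by (intro is_ideal_sum is_ideal_toric)
  have BsS: "set Bs \<subseteq> ?S"
  proof
    fix B assume "B \<in> set Bs"
    then have "B \<in> toric_ideal A1 \<or> B \<in> toric_ideal A2" using setBs A1(3) A2(3) by blast
    then show "B \<in> ?S"
    proof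
      assume "B \<in> toric_ideal A1"
      moreover have "(0 :: ('n, 'k) mpoly) \<in> toric_ideal A2" by (rule ideal_zero[OF is_ideal_toric])
      ultimately show "B \<in> ?S" unfolding ideal_sum_def by force
    next
      assume "B \<in> toric_ideal A2"
      moreover have "(0 :: ('n, 'k) mpoly) \<in> toric_ideal A1" by (rule ideal_zero[OF is_ideal_toric])
      ultimately show "B \<in> ?S" unfolding ideal_sum_def by force
    qed
  qed
  have genS: "ideal_gen (set Bs) \<subseteq> ?S" by (rule gen_least[OF Sid BsS])
  have SI: "?S \<subseteq> ?I"
  proof
    fix x assume "x \<in> ?S"
    then obtain a b where "x = a + b" "a \<in> toric_ideal A1" "b \<in> toric_ideal A2"
      unfolding ideal_sum_def by blast
    then show "x \<in> ?I" using A1(4) A2(4) ideal_add[OF is_ideal_toric] by blast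
  qed
  have eq: "?I = rad ?S"
  proof
    show "?I \<subseteq> rad ?S" using Bs(3) genS unfolding rad_def by blast
  next
    show "rad ?S \<subseteq> ?I"
    proof
      fix f assume "f \<in> rad ?S"
      then obtain k where "f ^ k \<in> ?S" unfolding rad_def by blast
      then have "f ^ k \<in> ?I" using SI by blast
      then show "f \<in> ?I" by (rule toric_radical)
    qed
  qed
  show ?thesis
    unfolding radical_splittable_def
    by (rule exI[of _ A1], rule exI[of _ A2], rule exI[of _ m1], rule exI[of _ m2],
        intro conjI A1(1,2,5) A2(1,2,5) eq)
qed

end
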